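(* Let $(V,Y_V)$ be a vertex algebra, $(M,Y_M)$ a $V$-module equipped with an operator $d$ satisfying $[d,Y_M(v,z)]=\frac{d}{dz}Y_M(v,z)$, and let $\overline V=V\oplus M$ be the vertex algebra with $$Y(v_1+m_1,z)(v_2+m_2)=Y_V(v_1,z)v_2+Y_M(v_1,z)m_2+e^{zd}Y_M(v_2,-z)m_1 .$$ Let $M_2,M_3$ be $V$-modules and let $\mathcal Y(\cdot,z)$ be an intertwining operator of type $\binom{M_3}{M\ \ M_2}$ (compatible with $d$, i.e. $\mathcal Y(dm,z)=\frac{d}{dz}\mathcal Y(m,z)$) involving only integral powers of $z$, i.e. $\mathcal Y(m,z)m_2\in M_3((z))$. Then $$Y_{M_2\oplus M_3}(v+m,z)(m_2+m_3)=Y(v,z)(m_2+m_3)+\mathcal Y(m,z)m_2\qquad(v\in V,\ m\in M,\ m_i\in M_i)$$ defines a $\overline V$-module structure on $M_2\oplus M_3$.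
   Context: Here $Y(v,z)$ on $M_2\oplus M_3$ denotes the direct sum of the module vertex operators of $M_2$ and $M_3$. In the module structure the elements of $M$ act on $M_2$ via $\mathcal Y$ and act by zero on $M_3$. *)

theory Defs
  imports Complex_Main "HOL-Library.Product_Plus"
begin

text \<open>Formal distributions are encoded by their modes: Y v n w is the coefficient
 v_n w of z^(-n-1) in Y(v,z)w.  Vector spaces over a field k of characteristic 0
 are additive groups with an explicit scalar multiplication.\<close>

definition fsum :: "(nat \<Rightarrow> 'a::comm_monoid_add) \<Rightarrow> 'a" where
  "fsum f = sum f {i. f i \<noteq> 0}"

text \<open>Borcherds (component form of the Jacobi) identity:
 sum_i binom(p,i) (u_(r+i) v)_(p+q-i) w
   = sum_i (-1)^i binom(r,i) (u_(p+r-i) v_(q+i) w - (-1)^r v_(q+r-i) u_(p+i) w).\<close>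
definition borcherds ::
  "('k::field_char_0 \<Rightarrow> 't::ab_group_add \<Rightarrow> 't) \<Rightarrow>
   ('u \<Rightarrow> int \<Rightarrow> 'v \<Rightarrow> 'x) \<Rightarrow> ('x \<Rightarrow> int \<Rightarrow> 'w \<Rightarrow> 't) \<Rightarrow>
   ('v \<Rightarrow> int \<Rightarrow> 'w \<Rightarrow> 'w1) \<Rightarrow> ('u \<Rightarrow> int \<Rightarrow> 'w1 \<Rightarrow> 't) \<Rightarrow>
   ('u \<Rightarrow> int \<Rightarrow> 'w \<Rightarrow> 'w2) \<Rightarrow> ('v \<Rightarrow> int \<Rightarrow> 'w2 \<Rightarrow> 't) \<Rightarrow> bool" where
  "borcherds s A B C D E F \<longleftrightarrow>
    (\<forall>u v w p q r.
      fsum (\<lambda>i. s ((of_int p) gchoose i) (B (A u (r + int i) v) (p + q - int i) w)) =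
      fsum (\<lambda>i. s ((-1) ^ i * ((of_int r) gchoose i)) (D u (p + r - int i) (C v (q + int i) w))
              - s ((-1) ^ i * ((of_int r) gchoose i) * ((-1) powi r)) (F v (q + r - int i) (E u (p + int i) w))))"

definition va_module ::
  "('k::field_char_0 \<Rightarrow> 'v::ab_group_add \<Rightarrow> 'v) \<Rightarrow> ('k \<Rightarrow> 'w::ab_group_add \<Rightarrow> 'w) \<Rightarrow>
   'v \<Rightarrow> ('v \<Rightarrow> int \<Rightarrow> 'v \<Rightarrow> 'v) \<Rightarrow> ('v \<Rightarrow> int \<Rightarrow> 'w \<Rightarrow> 'w) \<Rightarrow> bool" where
  "va_module sV sW one YV YW \<longleftrightarrow>
    Vector_Spaces.vector_space sV \<and> Vector_Spaces.vector_space sW \<and>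
    (\<forall>v n. Vector_Spaces.linear sW sW (YW v n)) \<and>
    (\<forall>n w. Vector_Spaces.linear sV sW (\<lambda>v. YW v n w)) \<and>
    (\<forall>v w. \<exists>N. \<forall>n\<ge>N. YW v n w = 0) \<and>
    (\<forall>n w. YW one n w = (if n = -1 then w else 0)) \<and>
    borcherds sW YV YW YW YW YW YW"

definition vertex_algebra ::
  "('k::field_char_0 \<Rightarrow> 'v::ab_group_add \<Rightarrow> 'v) \<Rightarrow> 'v \<Rightarrow> ('v \<Rightarrow> int \<Rightarrow> 'v \<Rightarrow> 'v) \<Rightarrow> bool" where
  "vertex_algebra sV one YV \<longleftrightarrow>
    va_module sV sV one YV YV \<and>
    (\<forall>v n. n \<ge> 0 \<longrightarrow> YV v n one = 0) \<and> (\<forall>v. YV v (-1) one = v)"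

text \<open>Intertwining operator of type (M3; M M2) with integral powers of z,
 satisfying the d-derivative property  I(d m, z) = d/dz I(m, z),
 i.e. (d m)_n = -n m_(n-1).\<close>
definition intertwining ::
  "('k::field_char_0 \<Rightarrow> 'v::ab_group_add \<Rightarrow> 'v) \<Rightarrow> ('k \<Rightarrow> 'm::ab_group_add \<Rightarrow> 'm) \<Rightarrow>
   ('k \<Rightarrow> 'm2::ab_group_add \<Rightarrow> 'm2) \<Rightarrow> ('k \<Rightarrow> 'm3::ab_group_add \<Rightarrow> 'm3) \<Rightarrow>
   ('v \<Rightarrow> int \<Rightarrow> 'm \<Rightarrow> 'm) \<Rightarrow> ('v \<Rightarrow> int \<Rightarrow> 'm2 \<Rightarrow> 'm2) \<Rightarrow> ('v \<Rightarrow> int \<Rightarrow> 'm3 \<Rightarrow> 'm3) \<Rightarrow>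
   ('m \<Rightarrow> 'm) \<Rightarrow> ('m \<Rightarrow> int \<Rightarrow> 'm2 \<Rightarrow> 'm3) \<Rightarrow> bool" where
  "intertwining sV sM sM2 sM3 YM YM2 YM3 d I \<longleftrightarrow>
    (\<forall>m n. Vector_Spaces.linear sM2 sM3 (I m n)) \<and>
    (\<forall>n w. Vector_Spaces.linear sM sM3 (\<lambda>m. I m n w)) \<and>
    (\<forall>m w. \<exists>N. \<forall>n\<ge>N. I m n w = 0) \<and>
    (\<forall>m n w. I (d m) n w = sM3 (- of_int n) (I m (n - 1) w)) \<and>
    borcherds sM3 YM I I YM3 YM2 I"

definition sprod :: "('k \<Rightarrow> 'a \<Rightarrow> 'a) \<Rightarrow> ('k \<Rightarrow> 'b \<Rightarrow> 'b) \<Rightarrow> 'k \<Rightarrow> 'a \<times> 'b \<Rightarrow> 'a \<times> 'b" where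
  "sprod s1 s2 c x = (s1 c (fst x), s2 c (snd x))"

text \<open>Vertex operator of Vbar = V + M:
 Y(v1+m1,z)(v2+m2) = Y_V(v1,z)v2 + Y_M(v1,z)m2 + e^(zd) Y_M(v2,-z) m1.
 The z^(-n-1) coefficient of the last term is
 sum_j (-1)^(n+j+1)/j! d^j ((v2)_(n+j) m1).\<close>
definition Ybar ::
  "('k::field_char_0 \<Rightarrow> 'm::ab_group_add \<Rightarrow> 'm) \<Rightarrow> ('v \<Rightarrow> int \<Rightarrow> 'v \<Rightarrow> 'v) \<Rightarrow>
   ('v \<Rightarrow> int \<Rightarrow> 'm \<Rightarrow> 'm) \<Rightarrow> ('m \<Rightarrow> 'm) \<Rightarrow> 'v \<times> 'm \<Rightarrow> int \<Rightarrow> 'v \<times> 'm \<Rightarrow> 'v \<times> 'm" where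
  "Ybar sM YV YM d x n y =
     (YV (fst x) n (fst y),
      YM (fst x) n (snd y) +
      fsum (\<lambda>j. sM (((-1) powi (n + int j + 1)) / fact j) ((d ^^ j) (YM (fst y) (n + int j) (snd x)))))"

definition Ysum ::
  "('v \<Rightarrow> int \<Rightarrow> 'm2 \<Rightarrow> 'm2) \<Rightarrow> ('v \<Rightarrow> int \<Rightarrow> 'm3::plus \<Rightarrow> 'm3) \<Rightarrow> ('m \<Rightarrow> int \<Rightarrow> 'm2 \<Rightarrow> 'm3) \<Rightarrow>
   'v \<times> 'm \<Rightarrow> int \<Rightarrow> 'm2 \<times> 'm3 \<Rightarrow> 'm2 \<times> 'm3" where
  "Ysum YM2 YM3 I x n y =
     (YM2 (fst x) n (fst y), YM3 (fst x) n (snd y) + I (snd x) n (fst y))"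

end

theory Submission
  imports Defs "HOL-Computational_Algebra.Formal_Power_Series"
begin

lemma lin_add: "Vector_Spaces.linear s1 s2 f \<Longrightarrow> f (x + y) = f x + f y"
  by (simp add: Vector_Spaces.linear_iff)
lemma lin_scale: "Vector_Spaces.linear s1 s2 f \<Longrightarrow> f (s1 c x) = s2 c (f x)"
  by (simp add: Vector_Spaces.linear_iff)
lemma lin_zero: "Vector_Spaces.linear s1 s2 f \<Longrightarrow> f 0 = 0"
proof -
  assume L: "Vector_Spaces.linear s1 s2 f"
  then interpret l: Vector_Spaces.linear s1 s2 f .
  show ?thesis by simp
qed
lemma lin_sum: "Vector_Spaces.linear s1 s2 f \<Longrightarrow> f (sum g A) = (\<Sum>a\<in>A. f (g a))"
proof -
  assume L: "Vector_Spaces.linear s1 s2 f"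
  then interpret l: Vector_Spaces.linear s1 s2 f .
  show ?thesis by (rule l.sum)
qed
lemma lin_diff: "Vector_Spaces.linear s1 s2 f \<Longrightarrow> f (x - y) = f x - f y"
proof -
  assume L: "Vector_Spaces.linear s1 s2 f"
  then interpret l: Vector_Spaces.linear s1 s2 f .
  show ?thesis by (rule l.diff)
qed

lemma vs_zero: "Vector_Spaces.vector_space s \<Longrightarrow> s c 0 = 0"
proof - assume "Vector_Spaces.vector_space s" then interpret vector_space s . show ?thesis by simp qed
lemma vs_zero_left: "Vector_Spaces.vector_space s \<Longrightarrow> s 0 x = 0"
proof - assume "Vector_Spaces.vector_space s" then interpret vector_space s . show ?thesis by simp qed
lemma vs_add: "Vector_Spaces.vector_space s \<Longrightarrow> s c (x + y) = s c x + s c y"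
proof - assume "Vector_Spaces.vector_space s" then interpret vector_space s . show ?thesis by (simp add: scale_right_distrib) qed
lemma vs_diff: "Vector_Spaces.vector_space s \<Longrightarrow> s c (x - y) = s c x - s c y"
proof - assume "Vector_Spaces.vector_space s" then interpret vector_space s . show ?thesis by (simp add: scale_right_diff_distrib) qed
lemma vs_scale: "Vector_Spaces.vector_space s \<Longrightarrow> s a (s b x) = s (a * b) x"
proof - assume "Vector_Spaces.vector_space s" then interpret vector_space s . show ?thesis by simp qed
lemma vs_sum: "Vector_Spaces.vector_space s \<Longrightarrow> s c (sum f A) = (\<Sum>a\<in>A. s c (f a))"
proof - assume "Vector_Spaces.vector_space s" then interpret vector_space s . show ?thesis by (simp add: scale_sum_right) qed
lemma vs_sum_left: "Vector_Spaces.vector_space s \<Longrightarrow> s (sum f A) x = (\<Sum>a\<in>A. s (f a) x)"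
proof - assume "Vector_Spaces.vector_space s" then interpret vector_space s . show ?thesis by (simp add: scale_sum_left) qed
lemma vs_ladd: "Vector_Spaces.vector_space s \<Longrightarrow> s (a + b) x = s a x + s b x"
proof - assume "Vector_Spaces.vector_space s" then interpret vector_space s . show ?thesis by (simp add: scale_left_distrib) qed
lemma vs_one: "Vector_Spaces.vector_space s \<Longrightarrow> s 1 x = x"
proof - assume "Vector_Spaces.vector_space s" then interpret vector_space s . show ?thesis by simp qed
lemma vs_neg: "Vector_Spaces.vector_space s \<Longrightarrow> s (- a) x = - s a x"
proof - assume "Vector_Spaces.vector_space s" then interpret vector_space s . show ?thesis by simp qed
lemma vs_eq0: "Vector_Spaces.vector_space s \<Longrightarrow> c \<noteq> 0 \<Longrightarrow> s c x = 0 \<longleftrightarrow> x = 0"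
proof - assume A: "Vector_Spaces.vector_space s" "c \<noteq> 0" interpret vector_space s by (rule A(1))
  show ?thesis using \<open>c \<noteq> 0\<close> by (metis scale_scale scale_one right_inverse mult.commute scale_zero_right)
qed

lemma fsum_eq_sum:
  assumes "\<forall>n\<ge>N. f n = 0" shows "fsum f = sum f {..<N}"
  unfolding fsum_def
proof (rule sum.mono_neutral_left)
  show "{i. f i \<noteq> 0} \<subseteq> {..<N}" using assms by (auto simp: not_less[symmetric])
qed (auto)

lemma fsum_zero: "fsum (\<lambda>i. 0) = 0" by (simp add: fsum_def)

lemma fsum_scale_nz:
  assumes "Vector_Spaces.vector_space s" "c \<noteq> 0"
  shows "fsum (\<lambda>i. s c (f i)) = s c (fsum f)"
  unfolding fsum_def by (simp add: vs_eq0[OF assms] vs_sum[OF assms(1)])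

lemma comb_id:
  fixes a x :: "'a::field_char_0"
  shows "(\<Sum>i\<le>k. (-1)^i * (a gchoose i) * ((x - of_nat i) gchoose (k - i))) = (x - a) gchoose k"
proof -
  have "(\<Sum>i\<le>k. (-1)^i * (a gchoose i) * ((x - of_nat i) gchoose (k - i)))
     = (\<Sum>i\<le>k. (-1)^k * ((a gchoose i) * ((of_nat k - x - 1) gchoose (k - i))))"
  proof (rule sum.cong)
    fix i assume "i \<in> {..k}" hence ik: "i \<le> k" by simp
    have "(x - of_nat i) gchoose (k - i) = (-1)^(k-i) * ((of_nat (k - i) - (x - of_nat i) - 1) gchoose (k - i))"
      by (rule gbinomial_negated_upper)
    also have "of_nat (k - i) - (x - of_nat i) - 1 = (of_nat k - x - 1 :: 'a)" using ik by (simp add: of_nat_diff)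
    finally have e: "(x - of_nat i) gchoose (k - i) = (-1)^(k-i) * ((of_nat k - x - 1) gchoose (k - i))" .
    have "(-1::'a)^i * (-1)^(k-i) = (-1)^k" using ik by (simp add: power_add[symmetric])
    then show "(-1)^i * (a gchoose i) * ((x - of_nat i) gchoose (k - i)) = (-1)^k * ((a gchoose i) * ((of_nat k - x - 1) gchoose (k - i)))"
      unfolding e by (metis (no_types, lifting) mult.assoc mult.left_commute)
  qed simp
  also have "\<dots> = (-1)^k * (\<Sum>i\<le>k. (a gchoose i) * ((of_nat k - x - 1) gchoose (k - i)))"
    by (simp add: sum_distrib_left)
  also have "(\<Sum>i\<le>k. (a gchoose i) * ((of_nat k - x - 1) gchoose (k - i))) = (a + (of_nat k - x - 1)) gchoose k"
    using gbinomial_Vandermonde[of a "of_nat k - x - 1" k] by (simp add: atMost_atLeast0)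
  also have "(-1)^k * ((a + (of_nat k - x - 1)) gchoose k) = (x - a) gchoose k"
    by (subst gbinomial_negated_upper[of "x - a"]) (simp add: algebra_simps)
  finally show ?thesis .
qed

lemma funpow_lin_zero: "Vector_Spaces.linear s s d \<Longrightarrow> (d ^^ j) 0 = 0"
  by (induction j) (simp_all add: lin_zero)

lemma I_dpow:
  assumes VS3: "Vector_Spaces.vector_space sM3"
    and Id: "\<forall>m n w. I (d m) n w = sM3 (- of_int n) (I m (n - 1) w)"
  shows "I ((d^^j) x) k w = sM3 ((-1)^j * fact j * (of_int k gchoose j)) (I x (k - int j) w)"
proof (induction j arbitrary: k)
  case 0
  then show ?case by (simp add: vs_one[OF VS3])
next
  case (Suc j)
  have "I ((d^^Suc j) x) k w = I (d ((d^^j) x)) k w" by simp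
  also have "\<dots> = sM3 (- of_int k) (I ((d^^j) x) (k - 1) w)" using Id by simp
  also have "\<dots> = sM3 (- of_int k * ((-1)^j * fact j * (of_int (k - 1) gchoose j))) (I x (k - 1 - int j) w)"
    by (simp add: Suc vs_scale[OF VS3])
  also have "- of_int k * ((-1)^j * fact j * (of_int (k - 1) gchoose j)) = ((-1)^Suc j * fact (Suc j) * (of_int k gchoose Suc j) :: 'a)"
  proof -
    have e: "of_int k * ((of_int k - 1) gchoose j) = of_nat (Suc j) * ((of_int k::'a) gchoose Suc j)"
      by (rule gbinomial_absorption[symmetric])
    have "- of_int k * ((-1)^j * fact j * (of_int (k - 1) gchoose j)) = - ((-1)^j * fact j * (of_int k * ((of_int k - 1) gchoose j)) :: 'a)"
      by (simp add: algebra_simps)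
    also have "\<dots> = - ((-1)^j * fact j * (of_nat (Suc j) * ((of_int k::'a) gchoose Suc j)))" by (simp only: e)
    also have "\<dots> = (-1)^Suc j * fact (Suc j) * (of_int k gchoose Suc j)" by (simp only: fact_Suc power_Suc) (simp add: algebra_simps)
    finally show ?thesis .
  qed
  finally show ?case by (simp add: algebra_simps)
qed

lemma swapped:
  fixes sM :: "'k::field_char_0 \<Rightarrow> 'm::ab_group_add \<Rightarrow> 'm"
    and sM3 :: "'k \<Rightarrow> 'm3::ab_group_add \<Rightarrow> 'm3"
    and YM :: "'v \<Rightarrow> int \<Rightarrow> 'm \<Rightarrow> 'm"
    and YM2 :: "'v \<Rightarrow> int \<Rightarrow> 'm2 \<Rightarrow> 'm2"
    and YM3 :: "'v \<Rightarrow> int \<Rightarrow> 'm3 \<Rightarrow> 'm3"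
    and d :: "'m \<Rightarrow> 'm"
    and I :: "'m \<Rightarrow> int \<Rightarrow> 'm2 \<Rightarrow> 'm3"
  assumes VS3: "Vector_Spaces.vector_space sM3"
    and VSM: "Vector_Spaces.vector_space sM"
    and dlin: "Vector_Spaces.linear sM sM d"
    and Ilin: "\<forall>n w. Vector_Spaces.linear sM sM3 (\<lambda>m. I m n w)"
    and Id: "\<forall>m n w. I (d m) n w = sM3 (- of_int n) (I m (n - 1) w)"
    and YMtr: "\<forall>v m. \<exists>N. \<forall>n\<ge>N. YM v n m = 0"
    and Bor: "borcherds sM3 YM I I YM3 YM2 I"
  shows "fsum (\<lambda>i. sM3 ((of_int p) gchoose i)
            (I (fsum (\<lambda>j. sM ((-1) powi (r + int i + int j + 1) / fact j) ((d^^j) (YM v (r + int i + int j) m)))) (p + q - int i) w))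
   = fsum (\<lambda>i. sM3 ((-1)^i * (of_int r gchoose i)) (I m (p + r - int i) (YM2 v (q + int i) w))
              - sM3 ((-1)^i * (of_int r gchoose i) * ((-1) powi r)) (YM3 v (q + r - int i) (I m (p + int i) w)))"
    (is "?L = ?R")
proof -
  define \<sigma> :: 'k where "\<sigma> = (-1) powi r"
  have \<sigma>\<sigma>: "\<sigma> * \<sigma> = 1" by (simp add: \<sigma>_def)
  have \<sigma>nz: "- \<sigma> \<noteq> 0" using \<sigma>\<sigma> by auto
  have Bor1: "fsum (\<lambda>i. sM3 ((of_int q) gchoose i) (I (YM v (r + int i) m) (q + p - int i) w)) =
      fsum (\<lambda>i. sM3 ((-1) ^ i * ((of_int r) gchoose i)) (YM3 v (q + r - int i) (I m (p + int i) w))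
              - sM3 ((-1) ^ i * ((of_int r) gchoose i) * \<sigma>) (I m (p + r - int i) (YM2 v (q + int i) w)))"
    using Bor unfolding borcherds_def \<sigma>_def by blast
  have "?R = fsum (\<lambda>i. sM3 (- \<sigma>) (sM3 ((-1) ^ i * ((of_int r) gchoose i)) (YM3 v (q + r - int i) (I m (p + int i) w))
              - sM3 ((-1) ^ i * ((of_int r) gchoose i) * \<sigma>) (I m (p + r - int i) (YM2 v (q + int i) w))))"
  proof (rule arg_cong[where f=fsum], rule ext)
    fix i
    let ?e = "(-1) ^ i * ((of_int r) gchoose i) :: 'k"
    have "sM3 (- \<sigma>) (sM3 ?e (YM3 v (q + r - int i) (I m (p + int i) w)) - sM3 (?e * \<sigma>) (I m (p + r - int i) (YM2 v (q + int i) w)))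
      = sM3 (- \<sigma> * ?e) (YM3 v (q + r - int i) (I m (p + int i) w)) - sM3 (- \<sigma> * (?e * \<sigma>)) (I m (p + r - int i) (YM2 v (q + int i) w))"
      by (simp add: vs_diff[OF VS3] vs_scale[OF VS3])
    also have "- \<sigma> * (?e * \<sigma>) = - ?e" using \<sigma>\<sigma> by (simp add: algebra_simps)
    finally show "sM3 ?e (I m (p + r - int i) (YM2 v (q + int i) w)) - sM3 (?e * (-1) powi r) (YM3 v (q + r - int i) (I m (p + int i) w)) = 
       sM3 (- \<sigma>) (sM3 ?e (YM3 v (q + r - int i) (I m (p + int i) w)) - sM3 (?e * \<sigma>) (I m (p + r - int i) (YM2 v (q + int i) w)))"
      by (simp add: vs_neg[OF VS3] \<sigma>_def mult.commute)
  qed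
  also have "\<dots> = sM3 (- \<sigma>) (fsum (\<lambda>i. sM3 ((of_int q) gchoose i) (I (YM v (r + int i) m) (q + p - int i) w)))"
    by (simp only: fsum_scale_nz[OF VS3 \<sigma>nz] Bor1)
  finally have R: "?R = \<dots>" .
  obtain R0 where R0: "\<forall>n\<ge>R0. YM v n m = 0" using YMtr by blast
  define K where "K = nat (R0 - r)"
  have YM0: "\<And>n. r + int K \<le> n \<Longrightarrow> YM v n m = 0" proof -
    fix n assume "r + int K \<le> n" then have "R0 \<le> n" unfolding K_def by linarith
    then show "YM v n m = 0" using R0 by blast
  qed
  define c where "c N b = I (YM v N m) b w" for N b
  have c0: "\<And>N b. r + int K \<le> N \<Longrightarrow> c N b = 0" unfolding c_def using YM0 lin_zero Ilin by metis
  have Ilin': "\<And>n w. Vector_Spaces.linear sM sM3 (\<lambda>m. I m n w)" using Ilin by blast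
  have IX: "I (fsum (\<lambda>j. sM ((-1) powi (r + int i + int j + 1) / fact j) ((d^^j) (YM v (r + int i + int j) m)))) k w
      = (\<Sum>j<K - i. sM3 (- \<sigma> * (-1)^i * (of_int k gchoose j)) (c (r + int i + int j) (k - int j)))" for i k
  proof -
    have "fsum (\<lambda>j. sM ((-1) powi (r + int i + int j + 1) / fact j) ((d^^j) (YM v (r + int i + int j) m)))
       = (\<Sum>j<K - i. sM ((-1) powi (r + int i + int j + 1) / fact j) ((d^^j) (YM v (r + int i + int j) m)))"
      by (rule fsum_eq_sum) (auto simp: YM0 funpow_lin_zero[OF dlin] vs_zero[OF VSM])
    then have "I (fsum (\<lambda>j. sM ((-1) powi (r + int i + int j + 1) / fact j) ((d^^j) (YM v (r + int i + int j) m)))) k w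
      = (\<Sum>j<K - i. sM3 ((-1) powi (r + int i + int j + 1) / fact j) (I ((d^^j) (YM v (r + int i + int j) m)) k w))"
      by (simp add: lin_sum[OF Ilin'] lin_scale[OF Ilin'])
    also have "\<dots> = (\<Sum>j<K - i. sM3 (- \<sigma> * (-1)^i * (of_int k gchoose j)) (c (r + int i + int j) (k - int j)))"
    proof (rule sum.cong[OF refl])
      fix j
      have pw: "((-1::'k) powi (r + int i + int j + 1)) = - \<sigma> * (-1)^i * (-1)^j"
        unfolding \<sigma>_def by (simp add: power_int_add)
      have "((-1) powi (r + int i + int j + 1) / fact j) * ((-1)^j * fact j * (of_int k gchoose j)) = (- \<sigma> * (-1)^i * (of_int k gchoose j) :: 'k)"
        proof -
        have jj: "(-1::'k)^j * (-1)^j = 1" by (simp add: power_mult_distrib[symmetric])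
        have fnz: "(fact j :: 'k) \<noteq> 0" by simp
        have "(- \<sigma> * (-1)^i * (-1)^j / fact j) * ((-1)^j * fact j * (of_int k gchoose j)) = 
           - \<sigma> * (-1)^i * ((-1)^j * (-1)^j) * (fact j / fact j) * (of_int k gchoose j)" by (simp add: field_simps)
        also have "\<dots> = - \<sigma> * (-1)^i * (of_int k gchoose j)" using jj fnz by simp
        finally show ?thesis unfolding pw .
      qed
      then show "sM3 ((-1) powi (r + int i + int j + 1) / fact j) (I ((d^^j) (YM v (r + int i + int j) m)) k w) =
         sM3 (- \<sigma> * (-1)^i * (of_int k gchoose j)) (c (r + int i + int j) (k - int j))"
        by (simp add: I_dpow[OF VS3 Id] vs_scale[OF VS3] c_def)
    qed
    finally show ?thesis .
  qed
  define g where "g i j = sM3 ((of_int p gchoose i) * (- \<sigma> * (-1)^i * (of_int (p + q - int i) gchoose j))) (c (r + int i + int j) (p + q - int i - int j))" for i j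
  have "?L = (\<Sum>i<K. sM3 ((of_int p) gchoose i)
            (I (fsum (\<lambda>j. sM ((-1) powi (r + int i + int j + 1) / fact j) ((d^^j) (YM v (r + int i + int j) m)))) (p + q - int i) w))"
    by (rule fsum_eq_sum) (auto simp: IX vs_zero[OF VS3])
  also have "\<dots> = (\<Sum>i<K. \<Sum>j<K - i. g i j)"
    by (rule sum.cong[OF refl]) (simp add: IX g_def vs_sum[OF VS3] vs_scale[OF VS3])
  also have "\<dots> = (\<Sum>(i,j)\<in>{(i,j). i + j < K}. g i j)"
  proof -
    have "{(i,j). i + j < K} = Sigma {..<K} (\<lambda>i. {..<K - i})" by auto
    then show ?thesis by (simp add: sum.Sigma)
  qed
  also have "\<dots> = (\<Sum>k<K. \<Sum>i\<le>k. g i (k - i))" by (rule sum.triangle_reindex)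
  also have "\<dots> = (\<Sum>k<K. sM3 (- \<sigma> * (of_int q gchoose k)) (c (r + int k) (q + p - int k)))"
  proof (rule sum.cong[OF refl])
    fix k
    have "(\<Sum>i\<le>k. g i (k - i)) = (\<Sum>i\<le>k. sM3 (- \<sigma> * ((-1)^i * (of_int p gchoose i) * ((of_int (p + q) - of_nat i) gchoose (k - i)))) (c (r + int k) (q + p - int k)))"
    proof (rule sum.cong[OF refl])
      fix i assume "i \<in> {..k}" then have ik: "i \<le> k" by simp
      have a: "r + int i + int (k - i) = r + int k" "p + q - int i - int (k - i) = q + p - int k" using ik by auto
      have b: "(of_int (p + q - int i) :: 'k) = of_int (p + q) - of_nat i" by simp
      show "g i (k - i) = sM3 (- \<sigma> * ((-1)^i * (of_int p gchoose i) * ((of_int (p + q) - of_nat i) gchoose (k - i)))) (c (r + int k) (q + p - int k))"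
        unfolding g_def a b by (simp add: algebra_simps)
    qed
    also have "\<dots> = sM3 (- \<sigma> * (\<Sum>i\<le>k. (-1)^i * (of_int p gchoose i) * ((of_int (p + q) - of_nat i) gchoose (k - i)))) (c (r + int k) (q + p - int k))"
      by (simp add: vs_sum_left[OF VS3] sum_distrib_left)
    also have "(\<Sum>i\<le>k. (-1)^i * (of_int p gchoose i) * ((of_int (p + q) - of_nat i) gchoose (k - i))) = ((of_int (p + q) - of_int p) gchoose k :: 'k)"
      by (rule comb_id)
    finally show "(\<Sum>i\<le>k. g i (k - i)) = sM3 (- \<sigma> * (of_int q gchoose k)) (c (r + int k) (q + p - int k))" by simp
  qed
  also have "\<dots> = sM3 (- \<sigma>) (\<Sum>k<K. sM3 (of_int q gchoose k) (c (r + int k) (q + p - int k)))"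
    by (simp add: vs_sum[OF VS3] vs_scale[OF VS3])
  also have "(\<Sum>k<K. sM3 (of_int q gchoose k) (c (r + int k) (q + p - int k))) = fsum (\<lambda>i. sM3 ((of_int q) gchoose i) (I (YM v (r + int i) m) (q + p - int i) w))"
  proof -
    have "fsum (\<lambda>i. sM3 ((of_int q) gchoose i) (I (YM v (r + int i) m) (q + p - int i) w)) = (\<Sum>i<K. sM3 ((of_int q) gchoose i) (I (YM v (r + int i) m) (q + p - int i) w))"
      by (rule fsum_eq_sum) (auto simp: YM0 lin_zero[OF Ilin'] vs_zero[OF VS3])
    then show ?thesis by (simp add: c_def)
  qed
  finally show ?thesis using R by simp
qed

lemma vs_prod:
  assumes "Vector_Spaces.vector_space s1" "Vector_Spaces.vector_space s2"
  shows "Vector_Spaces.vector_space (sprod s1 s2)"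
  using assms unfolding Vector_Spaces.vector_space_def sprod_def by simp

lemma ev_shift2:
  assumes "\<exists>N. \<forall>n\<ge>N. h n = 0"
  shows "\<forall>\<^sub>F i in sequentially. \<forall>j. h (a + int i + int j) = (0::'a::zero)"
proof -
  obtain N where N: "\<forall>n\<ge>N. h n = 0" using assms by blast
  show ?thesis unfolding eventually_sequentially
  proof (intro exI allI impI)
    fix i j assume "nat (N - a) \<le> i"
    then have "N \<le> a + int i + int j" by linarith
    then show "h (a + int i + int j) = 0" using N by blast
  qed
qed

lemma ev_shift:
  assumes "\<exists>N. \<forall>n\<ge>N. h n = 0"
  shows "\<forall>\<^sub>F i in sequentially. h (a + int i) = (0::'a::zero)"
  using ev_shift2[OF assms, of a] by (rule eventually_mono) (metis add.right_neutral of_nat_0)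

lemma fsum_pair3:
  assumes "\<forall>\<^sub>F i in sequentially. F1 i = 0" "\<forall>\<^sub>F i in sequentially. F2 i = 0"
    "\<forall>\<^sub>F i in sequentially. F3 i = 0" "\<forall>\<^sub>F i in sequentially. F4 i = 0"
  shows "fsum (\<lambda>i. (F1 i :: 'a::comm_monoid_add, F2 i + F3 i + F4 i :: 'b::comm_monoid_add)) = (fsum F1, fsum F2 + fsum F3 + fsum F4)"
proof -
  have "\<forall>\<^sub>F i in sequentially. F1 i = 0 \<and> F2 i = 0 \<and> F3 i = 0 \<and> F4 i = 0"
    using assms by (intro eventually_conj)
  then obtain N where N: "\<forall>n\<ge>N. F1 n = 0 \<and> F2 n = 0 \<and> F3 n = 0 \<and> F4 n = 0"
    unfolding eventually_sequentially by blast
  have e: "fsum F1 = sum F1 {..<N}" "fsum F2 = sum F2 {..<N}" "fsum F3 = sum F3 {..<N}" "fsum F4 = sum F4 {..<N}"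
    by (rule fsum_eq_sum; use N in blast)+
  have "fsum (\<lambda>i. (F1 i, F2 i + F3 i + F4 i)) = (\<Sum>i<N. (F1 i, F2 i + F3 i + F4 i))"
    by (rule fsum_eq_sum) (use N in \<open>auto simp: zero_prod_def\<close>)
  also have "\<dots> = (sum F1 {..<N}, sum F2 {..<N} + sum F3 {..<N} + sum F4 {..<N})"
    by (simp add: prod_eq_iff fst_sum snd_sum sum.distrib)
  finally show ?thesis by (simp add: e)
qed

theorem lemma2:
  fixes sV :: "'k::field_char_0 \<Rightarrow> 'v::ab_group_add \<Rightarrow> 'v"
    and sM :: "'k \<Rightarrow> 'm::ab_group_add \<Rightarrow> 'm"
    and sM2 :: "'k \<Rightarrow> 'm2::ab_group_add \<Rightarrow> 'm2"
    and sM3 :: "'k \<Rightarrow> 'm3::ab_group_add \<Rightarrow> 'm3"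
    and one :: 'v
    and YV :: "'v \<Rightarrow> int \<Rightarrow> 'v \<Rightarrow> 'v"
    and YM :: "'v \<Rightarrow> int \<Rightarrow> 'm \<Rightarrow> 'm"
    and YM2 :: "'v \<Rightarrow> int \<Rightarrow> 'm2 \<Rightarrow> 'm2"
    and YM3 :: "'v \<Rightarrow> int \<Rightarrow> 'm3 \<Rightarrow> 'm3"
    and d :: "'m \<Rightarrow> 'm"
    and I :: "'m \<Rightarrow> int \<Rightarrow> 'm2 \<Rightarrow> 'm3"
  assumes VA: "vertex_algebra sV one YV"
    and M: "va_module sV sM one YV YM"
    and d_lin: "Vector_Spaces.linear sM sM d"
    and d_comm: "\<forall>v n m. d (YM v n m) - YM v n (d m) = sM (- of_int n) (YM v (n - 1) m)"
    and M2: "va_module sV sM2 one YV YM2"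
    and M3: "va_module sV sM3 one YV YM3"
    and I: "intertwining sV sM sM2 sM3 YM YM2 YM3 d I"
  shows "va_module (sprod sV sM) (sprod sM2 sM3) (one, 0) (Ybar sM YV YM d) (Ysum YM2 YM3 I)"
proof -
  have VSV: "Vector_Spaces.vector_space sV" and YVtr: "\<forall>v w. \<exists>N. \<forall>n\<ge>N. YV v n w = 0"
    using VA unfolding vertex_algebra_def va_module_def by blast+
  have VSM: "Vector_Spaces.vector_space sM" and YMlw: "\<And>v n. Vector_Spaces.linear sM sM (YM v n)"
    and YMlv: "\<And>n w. Vector_Spaces.linear sV sM (\<lambda>v. YM v n w)"
    and YMtr: "\<forall>v w. \<exists>N. \<forall>n\<ge>N. YM v n w = 0"
    using M unfolding va_module_def by blast+
  have VS2: "Vector_Spaces.vector_space sM2" and Y2lw: "\<And>v n. Vector_Spaces.linear sM2 sM2 (YM2 v n)"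
    and Y2lv: "\<And>n w. Vector_Spaces.linear sV sM2 (\<lambda>v. YM2 v n w)"
    and Y2tr: "\<forall>v w. \<exists>N. \<forall>n\<ge>N. YM2 v n w = 0"
    and Y2vac: "\<And>n w. YM2 one n w = (if n = -1 then w else 0)"
    and B2: "borcherds sM2 YV YM2 YM2 YM2 YM2 YM2"
    using M2 unfolding va_module_def by blast+
  have VS3: "Vector_Spaces.vector_space sM3" and Y3lw: "\<And>v n. Vector_Spaces.linear sM3 sM3 (YM3 v n)"
    and Y3lv: "\<And>n w. Vector_Spaces.linear sV sM3 (\<lambda>v. YM3 v n w)"
    and Y3tr: "\<forall>v w. \<exists>N. \<forall>n\<ge>N. YM3 v n w = 0"
    and Y3vac: "\<And>n w. YM3 one n w = (if n = -1 then w else 0)"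
    and B3: "borcherds sM3 YV YM3 YM3 YM3 YM3 YM3"
    using M3 unfolding va_module_def by blast+
  have Ilw: "\<And>m n. Vector_Spaces.linear sM2 sM3 (I m n)"
    and Ilm: "\<And>n w. Vector_Spaces.linear sM sM3 (\<lambda>m. I m n w)"
    and Iall: "\<forall>n w. Vector_Spaces.linear sM sM3 (\<lambda>m. I m n w)"
    and Itr: "\<forall>m w. \<exists>N. \<forall>n\<ge>N. I m n w = 0"
    and Id: "\<forall>m n w. I (d m) n w = sM3 (- of_int n) (I m (n - 1) w)"
    and BI: "borcherds sM3 YM I I YM3 YM2 I"
    using I unfolding intertwining_def by blast+
  have z: "\<And>v n. YM2 v n 0 = 0" "\<And>n w. YM2 0 n w = 0" "\<And>v n. YM3 v n 0 = 0" "\<And>n w. YM3 0 n w = 0"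
    "\<And>m n. I m n 0 = 0" "\<And>n w. I 0 n w = 0"
    using lin_zero[OF Y2lw] lin_zero[OF Y2lv] lin_zero[OF Y3lw] lin_zero[OF Y3lv] lin_zero[OF Ilw] lin_zero[OF Ilm] by auto
  have zs: "\<And>c. sM2 c 0 = 0" "\<And>c. sM3 c 0 = 0" using vs_zero[OF VS2] vs_zero[OF VS3] by auto
  show ?thesis
    unfolding va_module_def
  proof (intro conjI allI)
    show "Vector_Spaces.vector_space (sprod sV sM)" by (rule vs_prod[OF VSV VSM])
    show "Vector_Spaces.vector_space (sprod sM2 sM3)" by (rule vs_prod[OF VS2 VS3])
  next
    fix x :: "'v \<times> 'm" and n
    show "Vector_Spaces.linear (sprod sM2 sM3) (sprod sM2 sM3) (Ysum YM2 YM3 I x n)"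
      unfolding Vector_Spaces.linear_iff
      by (simp add: vs_prod[OF VS2 VS3] Ysum_def sprod_def lin_add[OF Y2lw] lin_add[OF Y3lw] lin_add[OF Ilw]
          lin_scale[OF Y2lw] lin_scale[OF Y3lw] lin_scale[OF Ilw] vs_add[OF VS3])
  next
    fix n and w :: "'m2 \<times> 'm3"
    show "Vector_Spaces.linear (sprod sV sM) (sprod sM2 sM3) (\<lambda>x. Ysum YM2 YM3 I x n w)"
      unfolding Vector_Spaces.linear_iff
      by (simp add: vs_prod[OF VS2 VS3] vs_prod[OF VSV VSM] Ysum_def sprod_def lin_add[OF Y2lv] lin_add[OF Y3lv] lin_add[OF Ilm]
          lin_scale[OF Y2lv] lin_scale[OF Y3lv] lin_scale[OF Ilm] vs_add[OF VS3])
  next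
    fix x :: "'v \<times> 'm" and w :: "'m2 \<times> 'm3"
    obtain N1 where N1: "\<forall>n\<ge>N1. YM2 (fst x) n (fst w) = 0" using Y2tr by blast
    obtain N2 where N2: "\<forall>n\<ge>N2. YM3 (fst x) n (snd w) = 0" using Y3tr by blast
    obtain N3 where N3: "\<forall>n\<ge>N3. I (snd x) n (fst w) = 0" using Itr by blast
    show "\<exists>N. \<forall>n\<ge>N. Ysum YM2 YM3 I x n w = 0"
      by (rule exI[of _ "max N1 (max N2 N3)"]) (simp add: Ysum_def N1 N2 N3 zero_prod_def)
  next
    fix n and w :: "'m2 \<times> 'm3"
    show "Ysum YM2 YM3 I (one, 0) n w = (if n = - 1 then w else 0)"
      by (simp add: Ysum_def Y2vac Y3vac z zero_prod_def)
  next
    show "borcherds (sprod sM2 sM3) (Ybar sM YV YM d) (Ysum YM2 YM3 I) (Ysum YM2 YM3 I) (Ysum YM2 YM3 I) (Ysum YM2 YM3 I) (Ysum YM2 YM3 I)"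
      unfolding borcherds_def
    proof (intro allI)
      fix u v :: "'v \<times> 'm" and w :: "'m2 \<times> 'm3" and p q r :: int
      obtain v1 m1 where u: "u = (v1, m1)" by (cases u)
      obtain v2 m2 where v: "v = (v2, m2)" by (cases v)
      obtain w2 w3 where w: "w = (w2, w3)" by (cases w)
      define \<sigma> :: 'k where "\<sigma> = (-1) powi r"
      define c where "c i = ((of_int p) gchoose i :: 'k)" for i
      define e where "e i = ((-1) ^ i * ((of_int r) gchoose i) :: 'k)" for i
      define X where "X i = fsum (\<lambda>j. sM ((-1) powi (r + int i + int j + 1) / fact j) ((d^^j) (YM v2 (r + int i + int j) m1)))" for i :: nat
      define F1 where "F1 i = sM2 (c i) (YM2 (YV v1 (r + int i) v2) (p + q - int i) w2)" for i
      define G1 where "G1 i = sM2 (e i) (YM2 v1 (p + r - int i) (YM2 v2 (q + int i) w2)) - sM2 (e i * \<sigma>) (YM2 v2 (q + r - int i) (YM2 v1 (p + int i) w2))" for i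
      define F2 where "F2 i = sM3 (c i) (YM3 (YV v1 (r + int i) v2) (p + q - int i) w3)" for i
      define G2 where "G2 i = sM3 (e i) (YM3 v1 (p + r - int i) (YM3 v2 (q + int i) w3)) - sM3 (e i * \<sigma>) (YM3 v2 (q + r - int i) (YM3 v1 (p + int i) w3))" for i
      define F3 where "F3 i = sM3 (c i) (I (YM v1 (r + int i) m2) (p + q - int i) w2)" for i
      define G3 where "G3 i = sM3 (e i) (YM3 v1 (p + r - int i) (I m2 (q + int i) w2)) - sM3 (e i * \<sigma>) (I m2 (q + r - int i) (YM2 v1 (p + int i) w2))" for i
      define F4 where "F4 i = sM3 (c i) (I (X i) (p + q - int i) w2)" for i
      define G4 where "G4 i = sM3 (e i) (I m1 (p + r - int i) (YM2 v2 (q + int i) w2)) - sM3 (e i * \<sigma>) (YM3 v2 (q + r - int i) (I m1 (p + int i) w2))" for i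
      have E1: "fsum F1 = fsum G1" unfolding F1_def G1_def c_def e_def \<sigma>_def
        by (rule B2[unfolded borcherds_def, rule_format])
      have E2: "fsum F2 = fsum G2" unfolding F2_def G2_def c_def e_def \<sigma>_def
        by (rule B3[unfolded borcherds_def, rule_format])
      have E3: "fsum F3 = fsum G3" unfolding F3_def G3_def c_def e_def \<sigma>_def
        by (rule BI[unfolded borcherds_def, rule_format])
      have E4: "fsum F4 = fsum G4" unfolding F4_def G4_def c_def e_def \<sigma>_def X_def
        by (rule swapped[OF VS3 VSM d_lin Iall Id YMtr BI])
      show "fsum (\<lambda>i. sprod sM2 sM3 ((of_int p) gchoose i) (Ysum YM2 YM3 I (Ybar sM YV YM d u (r + int i) v) (p + q - int i) w)) =
        fsum (\<lambda>i. sprod sM2 sM3 ((-1) ^ i * ((of_int r) gchoose i)) (Ysum YM2 YM3 I u (p + r - int i) (Ysum YM2 YM3 I v (q + int i) w))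
              - sprod sM2 sM3 ((-1) ^ i * ((of_int r) gchoose i) * ((-1) powi r)) (Ysum YM2 YM3 I v (q + r - int i) (Ysum YM2 YM3 I u (p + int i) w)))"
      proof -
        have lhs: "sprod sM2 sM3 ((of_int p) gchoose i) (Ysum YM2 YM3 I (Ybar sM YV YM d u (r + int i) v) (p + q - int i) w)
          = (F1 i, F2 i + F3 i + F4 i)" for i
          unfolding sprod_def Ysum_def Ybar_def u v w F1_def F2_def F3_def F4_def X_def c_def
          by (simp add: lin_add[OF Ilm] vs_add[OF VS3] add.assoc)
        have rhs: "sprod sM2 sM3 ((-1) ^ i * ((of_int r) gchoose i)) (Ysum YM2 YM3 I u (p + r - int i) (Ysum YM2 YM3 I v (q + int i) w))
              - sprod sM2 sM3 ((-1) ^ i * ((of_int r) gchoose i) * ((-1) powi r)) (Ysum YM2 YM3 I v (q + r - int i) (Ysum YM2 YM3 I u (p + int i) w))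
          = (G1 i, G2 i + G3 i + G4 i)" for i
          unfolding sprod_def Ysum_def u v w G1_def G2_def G3_def G4_def e_def \<sigma>_def
          by (simp add: lin_add[OF Y3lw] vs_add[OF VS3] algebra_simps)
        have evF1: "\<forall>\<^sub>F i in sequentially. F1 i = 0"
        proof -
          have "\<forall>\<^sub>F i in sequentially. YV v1 (r + int i) v2 = 0" by (rule ev_shift) (use YVtr in blast)
          then show ?thesis by (rule eventually_mono) (simp add: F1_def z zs)
        qed
        have evF2: "\<forall>\<^sub>F i in sequentially. F2 i = 0"
        proof -
          have "\<forall>\<^sub>F i in sequentially. YV v1 (r + int i) v2 = 0" by (rule ev_shift) (use YVtr in blast)
          then show ?thesis by (rule eventually_mono) (simp add: F2_def z zs)
        qed
        have evF3: "\<forall>\<^sub>F i in sequentially. F3 i = 0"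
        proof -
          have "\<forall>\<^sub>F i in sequentially. YM v1 (r + int i) m2 = 0" by (rule ev_shift) (use YMtr in blast)
          then show ?thesis by (rule eventually_mono) (simp add: F3_def z zs)
        qed
        have evF4: "\<forall>\<^sub>F i in sequentially. F4 i = 0"
        proof -
          have "\<forall>\<^sub>F i in sequentially. \<forall>j. YM v2 (r + int i + int j) m1 = 0" by (rule ev_shift2) (use YMtr in blast)
          then show ?thesis by (rule eventually_mono)
            (simp add: F4_def X_def z zs funpow_lin_zero[OF d_lin] vs_zero[OF VSM] fsum_zero)
        qed
        have evG1: "\<forall>\<^sub>F i in sequentially. G1 i = 0"
        proof -
          have "\<forall>\<^sub>F i in sequentially. YM2 v2 (q + int i) w2 = 0" by (rule ev_shift) (use Y2tr in blast)
          moreover have "\<forall>\<^sub>F i in sequentially. YM2 v1 (p + int i) w2 = 0" by (rule ev_shift) (use Y2tr in blast)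
          ultimately show ?thesis by (rule eventually_elim2) (simp add: G1_def z zs)
        qed
        have evG2: "\<forall>\<^sub>F i in sequentially. G2 i = 0"
        proof -
          have "\<forall>\<^sub>F i in sequentially. YM3 v2 (q + int i) w3 = 0" by (rule ev_shift) (use Y3tr in blast)
          moreover have "\<forall>\<^sub>F i in sequentially. YM3 v1 (p + int i) w3 = 0" by (rule ev_shift) (use Y3tr in blast)
          ultimately show ?thesis by (rule eventually_elim2) (simp add: G2_def z zs)
        qed
        have evG3: "\<forall>\<^sub>F i in sequentially. G3 i = 0"
        proof -
          have "\<forall>\<^sub>F i in sequentially. I m2 (q + int i) w2 = 0" by (rule ev_shift) (use Itr in blast)
          moreover have "\<forall>\<^sub>F i in sequentially. YM2 v1 (p + int i) w2 = 0" by (rule ev_shift) (use Y2tr in blast)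
          ultimately show ?thesis by (rule eventually_elim2) (simp add: G3_def z zs)
        qed
        have evG4: "\<forall>\<^sub>F i in sequentially. G4 i = 0"
        proof -
          have "\<forall>\<^sub>F i in sequentially. YM2 v2 (q + int i) w2 = 0" by (rule ev_shift) (use Y2tr in blast)
          moreover have "\<forall>\<^sub>F i in sequentially. I m1 (p + int i) w2 = 0" by (rule ev_shift) (use Itr in blast)
          ultimately show ?thesis by (rule eventually_elim2) (simp add: G4_def z zs)
        qed
        show ?thesis
          by (simp only: lhs rhs fsum_pair3[OF evF1 evF2 evF3 evF4] fsum_pair3[OF evG1 evG2 evG3 evG4] E1 E2 E3 E4)
      qed
    qed
  qed
qed

end
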